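(* Let $\Phi$ be a Leonard system in $\mathcal A$ with parameter array $(\theta_i,\theta^*_i,i=0..d;\varphi_j,\phi_j,j=1..d)$ and let $\nu=\mathrm{tr}(E_0E^*_0)^{-1}$. Then $$\nu=\frac{\eta_d(\theta_0)\,\eta^*_d(\theta^*_0)}{\phi_1\phi_2\cdots\phi_d}.$$
   Context: Let $\mathbb K$ be a field, $d\ge 0$ an integer, and $\mathcal A$ a $\mathbb K$-algebra isomorphic to $\mathrm{Mat}_{d+1}(\mathbb K)$, with identity $I$ and trace $\mathrm{tr}$. An element $A\in\mathcal A$ is multiplicity-free if it has $d+1$ mutually distinct eigenvalues in $\mathbb K$; if $\theta_0,\dots,\theta_d$ is an ordering of them, the primitive idempotent of $A$ associated with $\theta_i$ is $E_i=\prod_{j\ne i}(A-\theta_jI)/(\theta_i-\theta_j)$. A Leonard system in $\mathcal A$ is a sequence $\Phi=(A;A^*;\{E_i\}_{i=0}^d;\{E^*_i\}_{i=0}^d)$ such that: (i) $A,A^*$ are multiplicity-free; (ii) $E_0,\dots,E_d$ is an ordering of the primitive idempotents of $A$; (iii) $E^*_0,\dots,E^*_d$ is an ordering of those of $A^*$; (iv) $E_iA^*E_j=0$ if $|i-j|>1$ and $\ne0$ if $|i-j|=1$ $(0\le i,j\le d)$; (v) $E^*_iAE^*_j=0$ if $|i-j|>1$ and $\neq0$ if $|i-j|=1$ $(0\le i,j\le d)$. $\theta_i$ (resp. $\theta^*_i$) is the eigenvalue of $A$ (resp. $A^*$) for $E_i$ (resp. $E^*_i$). One has $\mathrm{tr}(E_0E^*_0)\neq0$.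 It is known that there exist unique nonzero scalars $\varphi_1,\dots,\varphi_d\in\mathbb K$ (first split sequence) such that for some $\mathbb K$-algebra isomorphism $\natural:\mathcal A\to\mathrm{Mat}_{d+1}(\mathbb K)$, $A^\natural$ is lower bidiagonal with diagonal $\theta_0,\dots,\theta_d$ and subdiagonal entries all $1$, and $A^{*\natural}$ is upper bidiagonal with diagonal $\theta^*_0,\dots,\theta^*_d$ and $(A^{*\natural})_{i-1,i}=\varphi_i$. The second split sequence $\phi_1,\dots,\phi_d$ is the first split sequence of $(A;A^*;\{E_{d-i}\}_{i=0}^d;\{E^*_i\}_{i=0}^d)$. Polynomials: $\eta_i=\prod_{h=0}^{i-1}(\lambda-\theta_{d-h})$, $\eta^*_i=\prod_{h=0}^{i-1}(\lambda-\theta^*_{d-h})$. *)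

theory Defs
  imports "Jordan_Normal_Form.Char_Poly"
begin

text \<open>We work in the concrete algebra Mat_{d+1}(K) of (d+1)x(d+1) matrices over a field.\<close>

definition mat_trace :: "'a::comm_ring_1 mat \<Rightarrow> 'a" where
  "mat_trace M = (\<Sum>i<dim_row M. M $$ (i,i))"

definition alg_iso :: "nat \<Rightarrow> ('a::field mat \<Rightarrow> 'a mat) \<Rightarrow> bool" where
  "alg_iso n f \<longleftrightarrow>
     bij_betw f (carrier_mat n n) (carrier_mat n n) \<and>
     (\<forall>X\<in>carrier_mat n n. \<forall>Y\<in>carrier_mat n n.
        f (X * Y) = f X * f Y \<and> f (X + Y) = f X + f Y) \<and>
     (\<forall>c. \<forall>X\<in>carrier_mat n n. f (c \<cdot>\<^sub>m X) = c \<cdot>\<^sub>m f X) \<and>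
     f (1\<^sub>m n) = 1\<^sub>m n"

definition mult_free :: "nat \<Rightarrow> 'a::field mat \<Rightarrow> bool" where
  "mult_free d A \<longleftrightarrow> (\<exists>th. inj_on th {..d} \<and> (\<forall>i\<le>d. eigenvalue A (th i)))"

definition prim_idem :: "nat \<Rightarrow> 'a::field mat \<Rightarrow> (nat \<Rightarrow> 'a) \<Rightarrow> nat \<Rightarrow> 'a mat" where
  "prim_idem d A th i =
     foldr (\<lambda>j M. ((1 / (th i - th j)) \<cdot>\<^sub>m (A - th j \<cdot>\<^sub>m 1\<^sub>m (d+1))) * M)
           (filter (\<lambda>j. j \<noteq> i) [0..<d+1]) (1\<^sub>m (d+1))"

definition idem_ordering :: "nat \<Rightarrow> 'a::field mat \<Rightarrow> (nat \<Rightarrow> 'a mat) \<Rightarrow> bool" where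
  "idem_ordering d A E \<longleftrightarrow>
     (\<exists>th. inj_on th {..d} \<and> (\<forall>i\<le>d. eigenvalue A (th i)) \<and> (\<forall>i\<le>d. E i = prim_idem d A th i))"

definition leonard_system ::
  "nat \<Rightarrow> 'a::field mat \<Rightarrow> 'a mat \<Rightarrow> (nat \<Rightarrow> 'a mat) \<Rightarrow> (nat \<Rightarrow> 'a mat) \<Rightarrow> bool" where
  "leonard_system d A As E Es \<longleftrightarrow>
     A \<in> carrier_mat (d+1) (d+1) \<and> As \<in> carrier_mat (d+1) (d+1) \<and>
     mult_free d A \<and> mult_free d As \<and>
     idem_ordering d A E \<and> idem_ordering d As Es \<and>
     (\<forall>i\<le>d. \<forall>j\<le>d.
        (j + 1 < i \<or> i + 1 < j \<longrightarrow> E i * As * E j = 0\<^sub>m (d+1) (d+1)) \<and>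
        (i = j + 1 \<or> j = i + 1 \<longrightarrow> E i * As * E j \<noteq> 0\<^sub>m (d+1) (d+1))) \<and>
     (\<forall>i\<le>d. \<forall>j\<le>d.
        (j + 1 < i \<or> i + 1 < j \<longrightarrow> Es i * A * Es j = 0\<^sub>m (d+1) (d+1)) \<and>
        (i = j + 1 \<or> j = i + 1 \<longrightarrow> Es i * A * Es j \<noteq> 0\<^sub>m (d+1) (d+1)))"

definition split_seq ::
  "nat \<Rightarrow> 'a::field mat \<Rightarrow> 'a mat \<Rightarrow> (nat \<Rightarrow> 'a) \<Rightarrow> (nat \<Rightarrow> 'a) \<Rightarrow> (nat \<Rightarrow> 'a) \<Rightarrow> bool" where
  "split_seq d A As th ths phi \<longleftrightarrow>
     (\<forall>j\<in>{1..d}. phi j \<noteq> 0) \<and>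
     (\<exists>f. alg_iso (d+1) f \<and>
        f A = mat (d+1) (d+1) (\<lambda>(i,j). if i = j then th i else if i = j + 1 then 1 else 0) \<and>
        f As = mat (d+1) (d+1) (\<lambda>(i,j). if i = j then ths i else if j = i + 1 then phi j else 0))"

end

theory Submission
  imports Defs
begin


lemma mult_entry:
  assumes "A \<in> carrier_mat n n" "B \<in> carrier_mat n n" "i < n" "j < n"
  shows "(A*B)$$(i,j) = (\<Sum>l<n. A$$(i,l) * B$$(l,j))"
  using assms by (auto simp: scalar_prod_def lessThan_atLeast0 intro!: sum.cong)

lemma trace_comm:
  assumes "A \<in> carrier_mat n n" "B \<in> carrier_mat n n"
  shows "mat_trace (A*B) = mat_trace (B*A)"
proof -
  have "mat_trace (A*B) = (\<Sum>i<n. \<Sum>l<n. A$$(i,l) * B$$(l,i))"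
    using assms unfolding mat_trace_def by (auto intro!: sum.cong simp del: index_mult_mat(1) simp: mult_entry[OF assms])
  also have "\<dots> = (\<Sum>l<n. \<Sum>i<n. B$$(l,i) * A$$(i,l))"
    by (subst sum.swap) (simp add: mult.commute)
  also have "\<dots> = mat_trace (B*A)"
    using assms unfolding mat_trace_def by (auto intro!: sum.cong simp del: index_mult_mat(1) simp: mult_entry[OF assms(2,1)])
  finally show ?thesis .
qed

lemma trace_smult: "A \<in> carrier_mat n n \<Longrightarrow> mat_trace (c \<cdot>\<^sub>m A) = c * mat_trace A"
  by (auto simp: mat_trace_def sum_distrib_left intro!: sum.cong)

lemma prim_trace_one:
  fixes E :: "'a::field mat"
  assumes E: "E \<in> carrier_mat n n" and idem: "E * E = E" and nz: "E \<noteq> 0\<^sub>m n n"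
    and prim: "\<forall>X\<in>carrier_mat n n. \<exists>c. E * X * E = c \<cdot>\<^sub>m E"
  shows "mat_trace E = 1"
proof -
  obtain a b where ab: "a < n" "b < n" "E$$(a,b) \<noteq> 0"
    using nz E by (metis carrier_matD(1) carrier_matD(2) eq_matI index_zero_mat(1,2,3))
  define X :: "'a mat" where "X = mat n n (\<lambda>(i,j). if i = b \<and> j = a then 1 else 0)"
  have X: "X \<in> carrier_mat n n" by (simp add: X_def)
  have EX: "(E*X)$$(i,k) = (if k = a then E$$(i,b) else 0)" if "i<n" "k<n" for i k
  proof -
    have "(E*X)$$(i,k) = (\<Sum>l<n. E$$(i,l) * X$$(l,k))" using mult_entry[OF E X that] .
    also have "\<dots> = (\<Sum>l<n. if l = b then (if k = a then E$$(i,b) else 0) else 0)"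
      using that by (intro sum.cong) (auto simp: X_def)
    also have "\<dots> = (if k = a then E$$(i,b) else 0)" using ab by simp
    finally show ?thesis .
  qed
  have EXE: "(E*X*E)$$(i,j) = E$$(i,b) * E$$(a,j)" if "i<n" "j<n" for i j
  proof -
    have EXc: "E*X \<in> carrier_mat n n" using E X by simp
    have "(E*X*E)$$(i,j) = (\<Sum>k<n. (E*X)$$(i,k) * E$$(k,j))" using mult_entry[OF EXc E that] .
    also have "\<dots> = (\<Sum>k<n. if k = a then E$$(i,b) * E$$(a,j) else 0)"
      using that by (intro sum.cong) (auto simp: EX)
    also have "\<dots> = E$$(i,b) * E$$(a,j)" using ab by simp
    finally show ?thesis .
  qed
  obtain c where c: "E * X * E = c \<cdot>\<^sub>m E" using prim X by blast
  have "E$$(a,b) * E$$(a,b) = c * E$$(a,b)"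
    using EXE[OF ab(1,2)] c E ab by (metis carrier_matD(1) carrier_matD(2) index_smult_mat(1))
  hence cval: "c = E$$(a,b)" using ab(3) by simp
  have diag: "E$$(a,b) * E$$(i,i) = E$$(i,b) * E$$(a,i)" if "i<n" for i
    using EXE[OF that that] c E that cval by (metis carrier_matD(1) carrier_matD(2) index_smult_mat(1))
  have "E$$(a,b) * mat_trace E = (\<Sum>i<n. E$$(a,i) * E$$(i,b))"
    using E unfolding mat_trace_def sum_distrib_left by (auto intro!: sum.cong) (metis diag mult.commute)
  also have "\<dots> = (E*E)$$(a,b)" using mult_entry[OF E E ab(1,2)] by simp
  also have "\<dots> = E$$(a,b)" using idem by simp
  finally show ?thesis using ab(3) by simp
qed


definition hom_on :: "nat \<Rightarrow> ('a::field mat \<Rightarrow> 'a mat) \<Rightarrow> bool" where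
  "hom_on n f \<longleftrightarrow> (\<forall>X\<in>carrier_mat n n. f X \<in> carrier_mat n n) \<and>
     (\<forall>X\<in>carrier_mat n n. \<forall>Y\<in>carrier_mat n n. f (X * Y) = f X * f Y \<and> f (X + Y) = f X + f Y) \<and>
     (\<forall>c. \<forall>X\<in>carrier_mat n n. f (c \<cdot>\<^sub>m X) = c \<cdot>\<^sub>m f X) \<and> f (1\<^sub>m n) = 1\<^sub>m n"

lemma alg_iso_hom: "alg_iso n f \<Longrightarrow> hom_on n f"
  unfolding alg_iso_def hom_on_def bij_betw_def by auto

lemma hom_minus:
  assumes h: "hom_on n f" and X: "X \<in> carrier_mat n n" and Y: "Y \<in> carrier_mat n n"
  shows "f (X - Y) = f X - f Y"
proof -
  have XY: "X - Y \<in> carrier_mat n n" using X Y by (simp add: minus_carrier_mat)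
  have "X = (X - Y) + Y" using X Y by (intro eq_matI) auto
  hence "f X = f (X - Y) + f Y" using h XY Y unfolding hom_on_def by metis
  moreover have "f (X - Y) \<in> carrier_mat n n" "f Y \<in> carrier_mat n n" using h XY Y unfolding hom_on_def by auto
  ultimately show ?thesis by (intro eq_matI) auto
qed

lemma foldr_carrier:
  assumes "\<And>j. Y j \<in> carrier_mat n n" "M0 \<in> carrier_mat n n"
  shows "foldr (\<lambda>j M. Y j * M) js M0 \<in> carrier_mat n n"
  using assms by (induction js) (auto intro!: mult_carrier_mat[of _ n n])

lemma prim_idem_carrier:
  assumes "X \<in> carrier_mat (d+1) (d+1)"
  shows "prim_idem d X t i \<in> carrier_mat (d+1) (d+1)"
  unfolding prim_idem_def using assms by (intro foldr_carrier) (auto simp: minus_carrier_mat)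

lemma foldr_smult:
  fixes Y :: "nat \<Rightarrow> 'a::field mat"
  assumes "\<And>j. Y j \<in> carrier_mat n n" "M0 \<in> carrier_mat n n"
  shows "foldr (\<lambda>j M. (c j \<cdot>\<^sub>m Y j) * M) js M0 = prod_list (map c js) \<cdot>\<^sub>m foldr (\<lambda>j M. Y j * M) js M0"
proof (induction js)
  case Nil then show ?case using assms by (intro eq_matI) auto
next
  case (Cons a js)
  have F: "foldr (\<lambda>j M. Y j * M) js M0 \<in> carrier_mat n n" using foldr_carrier assms by blast
  have Ya: "Y a \<in> carrier_mat n n" using assms by auto
  have "(c a \<cdot>\<^sub>m Y a) * (prod_list (map c js) \<cdot>\<^sub>m foldr (\<lambda>j M. Y j * M) js M0)
     = c a \<cdot>\<^sub>m (Y a * (prod_list (map c js) \<cdot>\<^sub>m foldr (\<lambda>j M. Y j * M) js M0))"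
    by (rule mult_smult_assoc_mat[OF Ya smult_carrier_mat[OF F]])
  also have "\<dots> = c a \<cdot>\<^sub>m (prod_list (map c js) \<cdot>\<^sub>m (Y a * foldr (\<lambda>j M. Y j * M) js M0))"
    using Ya F by (simp add: mult_smult_distrib[of _ n n _ n])
  also have "\<dots> = (c a * prod_list (map c js)) \<cdot>\<^sub>m (Y a * foldr (\<lambda>j M. Y j * M) js M0)"
    by (intro eq_matI) auto
  finally show ?case using Cons by simp
qed

lemma hom_prim_idem:
  assumes h: "hom_on (d+1) f" and X: "X \<in> carrier_mat (d+1) (d+1)"
  shows "f (prim_idem d X t i) = prim_idem d (f X) t i"
proof -
  have fX: "f X \<in> carrier_mat (d+1) (d+1)" using h X unfolding hom_on_def by auto
  have "f (foldr (\<lambda>j M. (c j \<cdot>\<^sub>m (X - t j \<cdot>\<^sub>m 1\<^sub>m (d+1))) * M) js (1\<^sub>m (d+1)))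
      = foldr (\<lambda>j M. (c j \<cdot>\<^sub>m (f X - t j \<cdot>\<^sub>m 1\<^sub>m (d+1))) * M) js (1\<^sub>m (d+1))" for c js
  proof (induction js)
    case Nil then show ?case using h unfolding hom_on_def by auto
  next
    case (Cons a js)
    let ?F = "foldr (\<lambda>j M. (c j \<cdot>\<^sub>m (X - t j \<cdot>\<^sub>m 1\<^sub>m (d+1))) * M) js (1\<^sub>m (d+1))"
    have F: "?F \<in> carrier_mat (d+1) (d+1)" using X by (intro foldr_carrier) (auto simp: minus_carrier_mat)
    have Z: "X - t a \<cdot>\<^sub>m 1\<^sub>m (d+1) \<in> carrier_mat (d+1) (d+1)" by (simp add: minus_carrier_mat)
    have "f ((c a \<cdot>\<^sub>m (X - t a \<cdot>\<^sub>m 1\<^sub>m (d+1))) * ?F) = f (c a \<cdot>\<^sub>m (X - t a \<cdot>\<^sub>m 1\<^sub>m (d+1))) * f ?F"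
      using h F Z unfolding hom_on_def by auto
    also have "f (c a \<cdot>\<^sub>m (X - t a \<cdot>\<^sub>m 1\<^sub>m (d+1))) = c a \<cdot>\<^sub>m f (X - t a \<cdot>\<^sub>m 1\<^sub>m (d+1))"
      using h Z unfolding hom_on_def by auto
    also have "f (X - t a \<cdot>\<^sub>m 1\<^sub>m (d+1)) = f X - f (t a \<cdot>\<^sub>m 1\<^sub>m (d+1))"
      using hom_minus[OF h X] by simp
    also have "f (t a \<cdot>\<^sub>m 1\<^sub>m (d+1)) = t a \<cdot>\<^sub>m 1\<^sub>m (d+1)"
      using h unfolding hom_on_def by auto
    finally show ?case using Cons by simp
  qed
  from this[of "\<lambda>j. 1 / (t i - t j)"] show ?thesis unfolding prim_idem_def by blast
qed

definition revm :: "nat \<Rightarrow> 'a::field mat \<Rightarrow> 'a mat" where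
  "revm d X = mat (d+1) (d+1) (\<lambda>(i,j). X $$ (d-i, d-j))"

lemma revm_hom: "hom_on (d+1) (revm d)"
  unfolding hom_on_def
proof (intro conjI ballI allI)
  fix X Y :: "'a mat" assume X: "X \<in> carrier_mat (d+1) (d+1)" and Y: "Y \<in> carrier_mat (d+1) (d+1)"
  show "revm d (X + Y) = revm d X + revm d Y" using X Y by (intro eq_matI) (auto simp: revm_def)
  show "revm d (X * Y) = revm d X * revm d Y"
  proof (intro eq_matI)
    fix i j assume ij: "i < dim_row (revm d X * revm d Y)" "j < dim_col (revm d X * revm d Y)"
    hence ij': "i < d+1" "j < d+1" by (auto simp: revm_def)
    have RX: "revm d X \<in> carrier_mat (d+1) (d+1)" "revm d Y \<in> carrier_mat (d+1) (d+1)" by (auto simp: revm_def)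
    have "(revm d X * revm d Y) $$ (i,j) = (\<Sum>l<d+1. X$$(d-i,d-l) * Y$$(d-l,d-j))"
      using mult_entry[OF RX ij'] ij' by (auto simp: revm_def intro!: sum.cong)
    also have "\<dots> = (\<Sum>l<d+1. X$$(d-i,l) * Y$$(l,d-j))"
      by (rule sum.reindex_bij_witness[where i="\<lambda>l. d-l" and j="\<lambda>l. d-l"]) auto
    also have "\<dots> = (X*Y)$$(d-i,d-j)" using mult_entry[OF X Y, of "d-i" "d-j"] by simp
    finally show "revm d (X * Y) $$ (i, j) = (revm d X * revm d Y) $$ (i, j)"
      using ij' by (simp add: revm_def)
  qed (auto simp: revm_def)
next
  fix X :: "'a mat" and c assume X: "X \<in> carrier_mat (d+1) (d+1)"
  show "revm d (c \<cdot>\<^sub>m X) = c \<cdot>\<^sub>m revm d X" using X by (intro eq_matI) (auto simp: revm_def)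
  show "revm d X \<in> carrier_mat (d+1) (d+1)" by (simp add: revm_def)
next
  show "revm d (1\<^sub>m (d+1)) = 1\<^sub>m (d+1)" by (intro eq_matI) (auto simp: revm_def)
qed




lemma bidiag_mult_entry:
  fixes X T :: "'a::field mat"
  assumes X: "X \<in> carrier_mat (d+1) (d+1)" and T: "T \<in> carrier_mat (d+1) (d+1)"
    and ij: "i \<le> d" "j \<le> d" and Z: "\<And>l. l \<le> d \<Longrightarrow> l \<noteq> i \<Longrightarrow> l \<noteq> i+1 \<Longrightarrow> X$$(i,l) = 0"
  shows "(X*T)$$(i,j) = X$$(i,i)*T$$(i,j) + (if i < d then X$$(i,i+1)*T$$(i+1,j) else 0)"
proof -
  have "(X*T)$$(i,j) = (\<Sum>l<d+1. X$$(i,l) * T$$(l,j))" using mult_entry[OF X T] ij by simp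
  also have "\<dots> = (\<Sum>l<d+1. (if l = i then X$$(i,i)*T$$(i,j) else 0) +
      (if l = i+1 then X$$(i,i+1)*T$$(i+1,j) else 0))"
    by (intro sum.cong) (auto simp: Z)
  also have "\<dots> = X$$(i,i)*T$$(i,j) + (if i < d then X$$(i,i+1)*T$$(i+1,j) else 0)"
    using ij by (simp add: sum.distrib)
  finally show ?thesis .
qed

lemma upper_prod:
  fixes D s :: "nat \<Rightarrow> 'a::field"
  assumes k: "k \<le> d+1"
  defines "B \<equiv> mat (d+1) (d+1) (\<lambda>(i,j). if i = j then D i else if j = i+1 then s j else 0)"
  defines "T \<equiv> foldr (\<lambda>l M. (B - D l \<cdot>\<^sub>m 1\<^sub>m (d+1)) * M) [k..<d+1] (1\<^sub>m (d+1))"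
  shows "T \<in> carrier_mat (d+1) (d+1) \<and>
     (\<forall>i\<le>d. \<forall>j\<le>d. (j < i \<longrightarrow> T$$(i,j) = 0) \<and> (i + (d+1-k) < j \<longrightarrow> T$$(i,j) = 0) \<and>
        (i + (d+1-k) = j \<longrightarrow> T$$(i,j) = (\<Prod>l\<in>{i<..j}. s l)) \<and> (k \<le> i \<longrightarrow> T$$(i,j) = 0)) \<and>
     T$$(0,0) = (\<Prod>l\<in>{k..d}. D 0 - D l)"
  unfolding T_def
  using k
proof (induction k rule: inc_induct)
  case base
  show ?case by auto
next
  case (step k)
  define T' where "T' = foldr (\<lambda>l M. (B - D l \<cdot>\<^sub>m 1\<^sub>m (d+1)) * M) [Suc k..<d+1] (1\<^sub>m (d+1))"
  let ?X = "B - D k \<cdot>\<^sub>m 1\<^sub>m (d+1)"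
  have eq: "foldr (\<lambda>l M. (B - D l \<cdot>\<^sub>m 1\<^sub>m (d+1)) * M) [k..<d+1] (1\<^sub>m (d+1)) = ?X * T'"
  proof -
    have "[k..<d+1] = k # [Suc k..<d+1]" using step.hyps by (intro upt_conv_Cons) simp
    thus ?thesis unfolding T'_def by (simp only: foldr_Cons o_def)
  qed
  have Tc: "T' \<in> carrier_mat (d+1) (d+1)" using step.IH unfolding T'_def by blast
  have IH: "\<And>i j. i \<le> d \<Longrightarrow> j \<le> d \<Longrightarrow> (j < i \<longrightarrow> T'$$(i,j) = 0) \<and> (i + (d+1-Suc k) < j \<longrightarrow> T'$$(i,j) = 0) \<and>
        (i + (d+1-Suc k) = j \<longrightarrow> T'$$(i,j) = (\<Prod>l\<in>{i<..j}. s l)) \<and> (Suc k \<le> i \<longrightarrow> T'$$(i,j) = 0)"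
    using step.IH unfolding T'_def by blast
  have IH0: "T'$$(0,0) = (\<Prod>l\<in>{Suc k..d}. D 0 - D l)" using step.IH unfolding T'_def by blast
  have Xc: "?X \<in> carrier_mat (d+1) (d+1)" by (simp add: B_def minus_carrier_mat)
  have Xe: "?X$$(i,l) = (if i = l then D i - D k else if l = i+1 then s l else 0)" if "i \<le> d" "l \<le> d" for i l
    using that by (auto simp: B_def)
  have ent: "(?X * T')$$(i,j) = (D i - D k) * T'$$(i,j) + (if i < d then s (i+1) * T'$$(i+1,j) else 0)"
    if "i \<le> d" "j \<le> d" for i j
  proof -
    have Be: "B$$(i,l) = (if i = l then D i else if l = i+1 then s l else 0)" if "l \<le> d" for l
      using that \<open>i \<le> d\<close> by (auto simp: B_def)
    have Z: "?X$$(i,l) = 0" if "l \<le> d" "l \<noteq> i" "l \<noteq> i+1" for l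
      using that Xe[of i l] \<open>i \<le> d\<close> by auto
    show ?thesis using bidiag_mult_entry[OF Xc Tc that Z] that by (auto simp: Be)
  qed
  have m: "d+1-k = Suc (d+1-Suc k)" using step.hyps by simp
  show ?case unfolding eq
  proof (intro conjI allI impI)
    show "?X * T' \<in> carrier_mat (d+1) (d+1)" using Xc Tc by simp
  next
    fix i j assume ij: "i \<le> d" "j \<le> d"
    { assume "j < i" thus "(?X * T')$$(i,j) = 0" using ent[OF ij] IH[OF ij] IH[of "i+1" j] ij by auto }
    { assume "i + (d+1-k) < j" thus "(?X * T')$$(i,j) = 0" using ent[OF ij] IH[OF ij] IH[of "i+1" j] ij m by auto }
    { assume a: "i + (d+1-k) = j"
      hence "i < d" using m ij by linarith
      hence "(?X * T')$$(i,j) = s (i+1) * (\<Prod>l\<in>{i+1<..j}. s l)"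
        using ent[OF ij] IH[OF ij] IH[of "i+1" j] ij m a by auto
      also have "\<dots> = (\<Prod>l\<in>{i<..j}. s l)"
      proof -
        have "{i<..j} = insert (i+1) {i+1<..j}" using a m by auto
        thus ?thesis by simp
      qed
      finally show "(?X * T')$$(i,j) = (\<Prod>l\<in>{i<..j}. s l)" . }
    { assume a: "k \<le> i"
      show "(?X * T')$$(i,j) = 0"
      proof (cases "i = k")
        case True thus ?thesis using ent[OF ij] IH[of "i+1" j] ij by auto
      next
        case False thus ?thesis using ent[OF ij] IH[OF ij] IH[of "i+1" j] ij a by auto
      qed }
  next
    have "(?X * T')$$(0,0) = (D 0 - D k) * T'$$(0,0)"
      using ent[of 0 0] IH[of 1 0] by auto
    also have "\<dots> = (\<Prod>l\<in>{k..d}. D 0 - D l)"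
    proof -
      have "{k..d} = insert k {Suc k..d}" using step.hyps by auto
      thus ?thesis using IH0 by simp
    qed
    finally show "(?X * T')$$(0,0) = (\<Prod>l\<in>{k..d}. D 0 - D l)" .
  qed
qed




lemma filter_upt_nz: "filter (\<lambda>j. j \<noteq> 0) [0..<d+1] = [1..<d+1]"
  by (induction d) auto

lemma prim_idem_upper:
  fixes D s :: "nat \<Rightarrow> 'a::field"
  assumes inj: "inj_on D {..d}"
  defines "B \<equiv> mat (d+1) (d+1) (\<lambda>(i,j). if i = j then D i else if j = i+1 then s j else 0)"
  shows "prim_idem d B D 0 \<in> carrier_mat (d+1) (d+1) \<and>
    (\<forall>i\<le>d. \<forall>j\<le>d. 1 \<le> i \<longrightarrow> prim_idem d B D 0 $$ (i,j) = 0) \<and>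
    prim_idem d B D 0 $$ (0,0) = 1 \<and>
    prim_idem d B D 0 $$ (0,d) = (\<Prod>l\<in>{1..d}. s l) / (\<Prod>l\<in>{1..d}. D 0 - D l)"
proof -
  define T where "T = foldr (\<lambda>l M. (B - D l \<cdot>\<^sub>m 1\<^sub>m (d+1)) * M) [1..<d+1] (1\<^sub>m (d+1))"
  have U: "T \<in> carrier_mat (d+1) (d+1) \<and>
     (\<forall>i\<le>d. \<forall>j\<le>d. (j < i \<longrightarrow> T$$(i,j) = 0) \<and> (i + (d+1-1) < j \<longrightarrow> T$$(i,j) = 0) \<and>
        (i + (d+1-1) = j \<longrightarrow> T$$(i,j) = (\<Prod>l\<in>{i<..j}. s l)) \<and> (1 \<le> i \<longrightarrow> T$$(i,j) = 0)) \<and>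
     T$$(0,0) = (\<Prod>l\<in>{1..d}. D 0 - D l)"
    unfolding T_def B_def by (rule upper_prod) simp
  define c where "c = (\<Prod>l\<in>{1..d}. 1 / (D 0 - D l))"
  have nz: "D 0 - D l \<noteq> 0" if "l \<in> {1..d}" for l
    using inj that unfolding inj_on_def by fastforce
  have "prim_idem d B D 0 = foldr (\<lambda>j M. ((1 / (D 0 - D j)) \<cdot>\<^sub>m (B - D j \<cdot>\<^sub>m 1\<^sub>m (d+1))) * M)
           [1..<d+1] (1\<^sub>m (d+1))"
    unfolding prim_idem_def filter_upt_nz ..
  also have "\<dots> = prod_list (map (\<lambda>j. 1 / (D 0 - D j)) [1..<d+1]) \<cdot>\<^sub>m T"
    unfolding T_def by (rule foldr_smult) (auto simp: B_def minus_carrier_mat)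
  also have "prod_list (map (\<lambda>j. 1 / (D 0 - D j)) [1..<d+1]) = c"
  proof -
    have "set [1..<d+1] = {1..d}" by auto
    moreover have "prod_list (map (\<lambda>j. 1 / (D 0 - D j)) [1..<d+1]) = (\<Prod>j\<in>set [1..<d+1]. 1 / (D 0 - D j))"
      by (rule prod.distinct_set_conv_list[symmetric]) simp
    ultimately show ?thesis unfolding c_def by simp
  qed
  finally have P: "prim_idem d B D 0 = c \<cdot>\<^sub>m T" .
  have c1: "c * (\<Prod>l\<in>{1..d}. D 0 - D l) = 1"
    unfolding c_def prod.distrib[symmetric] by (rule prod.neutral) (use nz in auto)
  have T0d: "T$$(0,d) = (\<Prod>l\<in>{1..d}. s l)"
  proof -
    have "{0<..d} = {1..d}" by auto
    thus ?thesis using U by auto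
  qed
  have c_eq: "c = 1 / (\<Prod>l\<in>{1..d}. D 0 - D l)" unfolding c_def by (simp add: prod_dividef)
  show ?thesis
    unfolding P using U c1 T0d by (auto simp: c_eq)
qed




lemma col_single:
  fixes P :: "'a::field mat"
  assumes r: "r < n" and j: "j < n" and Z: "\<forall>i<n. \<forall>j<n. i \<noteq> r \<longrightarrow> P$$(i,j) = 0"
  shows "(\<Sum>k<n. g k * P$$(k,j)) = g r * P$$(r,j)"
proof -
  have "(\<Sum>k<n. g k * P$$(k,j)) = (\<Sum>k<n. if k = r then g r * P$$(r,j) else 0)"
    using Z j by (intro sum.cong) auto
  also have "\<dots> = g r * P$$(r,j)" using r by simp
  finally show ?thesis .
qed

lemma row_rank1:
  fixes P :: "'a::field mat"
  assumes P: "P \<in> carrier_mat n n" and r: "r < n" and Z: "\<forall>i<n. \<forall>j<n. i \<noteq> r \<longrightarrow> P$$(i,j) = 0"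
    and one: "P$$(r,r) = 1"
  shows "P * P = P" "\<forall>Y::'a mat\<in>carrier_mat n n. P * Y * P = (P*Y)$$(r,r) \<cdot>\<^sub>m P" "P \<noteq> 0\<^sub>m n n"
proof -
  show "P * P = P"
  proof (rule eq_matI)
    fix i j assume "i < dim_row P" "j < dim_col P"
    hence ij: "i < n" "j < n" using P by auto
    have "(P*P)$$(i,j) = (\<Sum>k<n. P$$(i,k) * P$$(k,j))" using mult_entry[OF P P ij] .
    also have "\<dots> = P$$(i,r) * P$$(r,j)" using col_single[OF r ij(2) Z] .
    also have "\<dots> = P$$(i,j)" using Z ij one r by (cases "i = r") auto
    finally show "(P*P)$$(i,j) = P$$(i,j)" .
  qed (use P in auto)
  show "\<forall>Y::'a mat\<in>carrier_mat n n. P * Y * P = (P*Y)$$(r,r) \<cdot>\<^sub>m P"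
  proof
    fix Y :: "'a mat" assume Y: "Y \<in> carrier_mat n n"
    have PY: "P * Y \<in> carrier_mat n n" using P Y by simp
    show "P * Y * P = (P*Y)$$(r,r) \<cdot>\<^sub>m P"
    proof (rule eq_matI)
      fix i j assume "i < dim_row ((P*Y)$$(r,r) \<cdot>\<^sub>m P)" "j < dim_col ((P*Y)$$(r,r) \<cdot>\<^sub>m P)"
      hence ij: "i < n" "j < n" using P by auto
      have "(P*Y*P)$$(i,j) = (\<Sum>k<n. (P*Y)$$(i,k) * P$$(k,j))" using mult_entry[OF PY P ij] .
      also have "\<dots> = (P*Y)$$(i,r) * P$$(r,j)" using col_single[OF r ij(2) Z] .
      also have "\<dots> = (P*Y)$$(r,r) * P$$(i,j)"
      proof (cases "i = r")
        case False
        have "(P*Y)$$(i,r) = (\<Sum>l<n. P$$(i,l) * Y$$(l,r))" using mult_entry[OF P Y ij(1) r] .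
        also have "\<dots> = 0" using Z ij False by (intro sum.neutral) auto
        finally show ?thesis using Z ij False by auto
      qed simp
      finally show "(P*Y*P)$$(i,j) = ((P*Y)$$(r,r) \<cdot>\<^sub>m P)$$(i,j)" using P ij by simp
    qed (use P in auto)
  qed
  show "P \<noteq> 0\<^sub>m n n" using one r by (metis index_zero_mat(1) zero_neq_one)
qed

lemma revm_revm: "X \<in> carrier_mat (d+1) (d+1) \<Longrightarrow> revm d (revm d X) = X"
  by (intro eq_matI) (auto simp: revm_def)

lemma prod_rev_idx: "(\<Prod>h<(d::nat). g (d - h)) = (\<Prod>l\<in>{1..d}. (g l :: 'a::comm_monoid_mult))"
  apply (rule prod.reindex_bij_witness[where i="\<lambda>l. d - l" and j="\<lambda>h. d - h"])
  apply auto
  done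

theorem theorem17p9:
  fixes d :: nat and A As :: "'a::field mat" and E Es :: "nat \<Rightarrow> 'a mat"
    and th ths phi :: "nat \<Rightarrow> 'a"
  assumes LS: "leonard_system d A As E Es"
    and th: "inj_on th {..d}" "\<forall>i\<le>d. eigenvalue A (th i)" "\<forall>i\<le>d. E i = prim_idem d A th i"
    and ths: "inj_on ths {..d}" "\<forall>i\<le>d. eigenvalue As (ths i)" "\<forall>i\<le>d. Es i = prim_idem d As ths i"
    and phi: "split_seq d A As (\<lambda>i. th (d - i)) ths phi"
  shows "inverse (mat_trace (E 0 * Es 0)) =
           (\<Prod>h<d. th 0 - th (d - h)) * (\<Prod>h<d. ths 0 - ths (d - h)) / (\<Prod>j=1..d. phi j)"
proof -
  let ?n = "d+1"
  have Ac: "A \<in> carrier_mat ?n ?n" and Asc: "As \<in> carrier_mat ?n ?n"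
    using LS unfolding leonard_system_def by auto
  obtain f where f: "alg_iso ?n f"
    and fA: "f A = mat ?n ?n (\<lambda>(i,j). if i = j then th (d - i) else if i = j + 1 then 1 else 0)"
    and fAs: "f As = mat ?n ?n (\<lambda>(i,j). if i = j then ths i else if j = i + 1 then phi j else 0)"
    and phinz: "\<forall>j\<in>{1..d}. phi j \<noteq> 0"
    using phi unfolding split_seq_def by blast
  have h: "hom_on ?n f" using alg_iso_hom[OF f] .
  have finj: "inj_on f (carrier_mat ?n ?n)" using f unfolding alg_iso_def bij_betw_def by auto
  have fc: "\<And>X. X \<in> carrier_mat ?n ?n \<Longrightarrow> f X \<in> carrier_mat ?n ?n" using h unfolding hom_on_def by auto
  have fmult: "\<And>X Y. X \<in> carrier_mat ?n ?n \<Longrightarrow> Y \<in> carrier_mat ?n ?n \<Longrightarrow> f (X * Y) = f X * f Y"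
    using h unfolding hom_on_def by auto
  have fsm: "\<And>c X. X \<in> carrier_mat ?n ?n \<Longrightarrow> f (c \<cdot>\<^sub>m X) = c \<cdot>\<^sub>m f X"
    using h unfolding hom_on_def by auto
  define E0 where "E0 = prim_idem d A th 0"
  define Es0 where "Es0 = prim_idem d As ths 0"
  have E0e: "E 0 = E0" "Es 0 = Es0" using th(3) ths(3) by (auto simp: E0_def Es0_def)
  have E0c: "E0 \<in> carrier_mat ?n ?n" "Es0 \<in> carrier_mat ?n ?n"
    unfolding E0_def Es0_def using prim_idem_carrier Ac Asc by auto
  define L where "L = f A"
  define U where "U = f As"
  have Lc: "L \<in> carrier_mat ?n ?n" by (simp add: L_def fA)
  define P where "P = f E0"
  define Q where "Q = f Es0"
  have PL: "P = prim_idem d L th 0" unfolding P_def E0_def L_def using hom_prim_idem[OF h Ac] .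
  have QU: "Q = prim_idem d U ths 0" unfolding Q_def Es0_def U_def using hom_prim_idem[OF h Asc] .
  have Qprops: "Q \<in> carrier_mat ?n ?n \<and> (\<forall>i\<le>d. \<forall>j\<le>d. 1 \<le> i \<longrightarrow> Q $$ (i,j) = 0) \<and>
    Q $$ (0,0) = 1 \<and> Q $$ (0,d) = (\<Prod>l\<in>{1..d}. phi l) / (\<Prod>l\<in>{1..d}. ths 0 - ths l)"
    unfolding QU U_def fAs by (rule prim_idem_upper[OF ths(1)])
  define R where "R = revm d P"
  have RL: "R = prim_idem d (revm d L) th 0" unfolding R_def PL using hom_prim_idem[OF revm_hom Lc] .
  have revL: "revm d L = mat ?n ?n (\<lambda>(i,j). if i = j then th i else if j = i+1 then (\<lambda>_. 1) j else 0)"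
    by (intro eq_matI) (auto simp: revm_def L_def fA)
  have Rprops: "R \<in> carrier_mat ?n ?n \<and> (\<forall>i\<le>d. \<forall>j\<le>d. 1 \<le> i \<longrightarrow> R $$ (i,j) = 0) \<and>
    R $$ (0,0) = 1 \<and> R $$ (0,d) = (\<Prod>l\<in>{1..d}. (\<lambda>_. 1) l) / (\<Prod>l\<in>{1..d}. th 0 - th l)"
    unfolding RL revL by (rule prim_idem_upper[OF th(1)])
  have Pc: "P \<in> carrier_mat ?n ?n" unfolding P_def using fc E0c by auto
  have Pent: "P $$ (i,j) = R $$ (d-i, d-j)" if "i \<le> d" "j \<le> d" for i j
  proof -
    have "P = revm d R" unfolding R_def using revm_revm[OF Pc] by simp
    thus ?thesis using that by (simp add: revm_def)
  qed
  have PZ: "\<forall>i<?n. \<forall>j<?n. i \<noteq> d \<longrightarrow> P$$(i,j) = 0" using Pent Rprops by auto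
  have Pdd: "P$$(d,d) = 1" using Pent Rprops by auto
  have Pd0: "P$$(d,0) = 1 / (\<Prod>l\<in>{1..d}. th 0 - th l)" using Pent[of d 0] Rprops by auto
  note P1 = row_rank1[OF Pc less_add_one[of d] PZ Pdd]
  have finjE: "\<And>X Y. f X = f Y \<Longrightarrow> X \<in> carrier_mat ?n ?n \<Longrightarrow> Y \<in> carrier_mat ?n ?n \<Longrightarrow> X = Y"
    using finj unfolding inj_on_def by blast
  have E0idem: "E0 * E0 = E0"
  proof (rule finjE)
    show "f (E0 * E0) = f E0" using P1(1) fmult[OF E0c(1) E0c(1)] unfolding P_def by simp
  qed (use E0c in auto)
  have E0nz: "E0 \<noteq> 0\<^sub>m ?n ?n"
  proof
    assume z: "E0 = 0\<^sub>m ?n ?n"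
    have "(0::'a) \<cdot>\<^sub>m E0 = E0" using z by (intro eq_matI) auto
    hence "P = 0 \<cdot>\<^sub>m P" unfolding P_def using fsm[OF E0c(1), of 0] by simp
    also have "\<dots> = 0\<^sub>m ?n ?n" using Pc by (intro eq_matI) auto
    finally show False using P1(3) by simp
  qed
  have E0prim: "\<forall>X::'a mat\<in>carrier_mat ?n ?n. \<exists>c. E0 * X * E0 = c \<cdot>\<^sub>m E0"
  proof
    fix X :: "'a mat" assume X: "X \<in> carrier_mat ?n ?n"
    have EX: "E0 * X \<in> carrier_mat ?n ?n" using E0c X by simp
    have "f (E0 * X * E0) = f (E0 * X) * f E0" by (rule fmult[OF EX E0c(1)])
    also have "\<dots> = P * f X * P" unfolding fmult[OF E0c(1) X] P_def ..
    also have "\<dots> = (P * f X)$$(d,d) \<cdot>\<^sub>m P" using bspec[OF P1(2) fc[OF X]] .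
    also have "\<dots> = f ((P * f X)$$(d,d) \<cdot>\<^sub>m E0)" unfolding P_def using fsm[OF E0c(1)] by simp
    finally have "E0 * X * E0 = (P * f X)$$(d,d) \<cdot>\<^sub>m E0"
      by (rule finjE) (use EX E0c in auto)
    thus "\<exists>c. E0 * X * E0 = c \<cdot>\<^sub>m E0" by blast
  qed
  have trE0: "mat_trace E0 = 1" by (rule prim_trace_one[OF E0c(1) E0idem E0nz E0prim])
  define c0 where "c0 = (P * Q)$$(d,d)"
  have Qc: "Q \<in> carrier_mat ?n ?n" using Qprops by blast
  have EEE: "E0 * Es0 * E0 = c0 \<cdot>\<^sub>m E0"
  proof -
    have EX: "E0 * Es0 \<in> carrier_mat ?n ?n" using E0c by simp
    have "f (E0 * Es0 * E0) = f (E0 * Es0) * f E0" by (rule fmult[OF EX E0c(1)])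
    also have "\<dots> = P * Q * P" unfolding fmult[OF E0c(1) E0c(2)] P_def Q_def ..
    also have "\<dots> = c0 \<cdot>\<^sub>m P" unfolding c0_def using bspec[OF P1(2) Qc] .
    also have "\<dots> = f (c0 \<cdot>\<^sub>m E0)" unfolding P_def using fsm[OF E0c(1)] by simp
    finally show ?thesis
      by (rule finjE) (use EX E0c in auto)
  qed
  have "mat_trace (E0 * Es0) = mat_trace (E0 * (E0 * Es0))"
    using E0idem E0c by (simp add: assoc_mult_mat[symmetric, of E0 ?n ?n E0 ?n Es0 ?n])
  also have "\<dots> = mat_trace ((E0 * Es0) * E0)" using E0c by (intro trace_comm[of _ ?n]) auto
  also have "\<dots> = c0" using EEE trace_smult[OF E0c(1)] trE0 by simp
  finally have trc: "mat_trace (E0 * Es0) = c0" .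
  have QZ: "\<forall>i<?n. \<forall>j<?n. i \<noteq> 0 \<longrightarrow> Q$$(i,j) = 0" using Qprops by auto
  have "c0 = (\<Sum>k<?n. P$$(d,k) * Q$$(k,d))" unfolding c0_def using mult_entry[OF Pc Qc, of d d] by simp
  also have "\<dots> = P$$(d,0) * Q$$(0,d)" by (rule col_single[OF _ _ QZ]) auto
  finally have c0v: "c0 = (\<Prod>l\<in>{1..d}. phi l) / ((\<Prod>l\<in>{1..d}. th 0 - th l) * (\<Prod>l\<in>{1..d}. ths 0 - ths l))"
    using Pd0 Qprops by simp
  have nz1: "(\<Prod>l\<in>{1..d}. th 0 - th l) \<noteq> 0"
  proof -
    have "th 0 - th l \<noteq> 0" if "l \<in> {1..d}" for l
    proof
      assume "th 0 - th l = 0"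
      hence "0 = l" using inj_onD[OF th(1), of 0 l] that by auto
      thus False using that by simp
    qed
    thus ?thesis by (simp add: prod_zero_iff)
  qed 
  have nz2: "(\<Prod>l\<in>{1..d}. ths 0 - ths l) \<noteq> 0"
  proof -
    have "ths 0 - ths l \<noteq> 0" if "l \<in> {1..d}" for l
    proof
      assume "ths 0 - ths l = 0"
      hence "0 = l" using inj_onD[OF ths(1), of 0 l] that by auto
      thus False using that by simp
    qed
    thus ?thesis by (simp add: prod_zero_iff)
  qed
  have nz3: "(\<Prod>l\<in>{1..d}. phi l) \<noteq> 0" using phinz by (auto simp: prod_zero_iff)
  show ?thesis unfolding E0e trc c0v prod_rev_idx[of "\<lambda>l. th 0 - th l"] prod_rev_idx[of "\<lambda>l. ths 0 - ths l"]
    using nz1 nz2 nz3 by (simp add: field_simps)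
qed



end
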